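(* Let $n\ge2$ and let $M,S,L\subset\mathbb{R}^n$ be the sets of mixed, split and level points. Then there exists a homeomorphism $g:\mathbb{R}^n\to L\times\mathbb{R}$ with $g(M)=L\times(-\infty,0)$ and $g(S)=L\times(0,+\infty)$. In particular $\overline{M}\cap\overline{S}=L$.
   Context: Write $[n]=\{1,\dots,n\}$. For $x\in\mathbb{R}^n$ let $t(x)=\min\{x_k-x_{k'}: k\in[n]\text{ odd},\ k'\in[n]\text{ even}\}$. The point $x$ is mixed, level or split according as $t(x)<0$, $t(x)=0$ or $t(x)>0$; $M$, $L$, $S$ denote the sets of mixed, level and split points in $\mathbb{R}^n$. *)

theory Defs
  imports "HOL-Analysis.Analysis"
begin

text \<open>R^n is modelled as the functions nat => real supported in {1..n}, carrying the
  subspace topology of the product topology on nat => real (which restricts to the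
  Euclidean topology).\<close>

definition Rn :: "nat \<Rightarrow> (nat \<Rightarrow> real) set" where
  "Rn n = {x. \<forall>k. k \<notin> {1..n} \<longrightarrow> x k = 0}"

definition tval :: "nat \<Rightarrow> (nat \<Rightarrow> real) \<Rightarrow> real" where
  "tval n x = Min {x k - x k' | k k'. k \<in> {1..n} \<and> odd k \<and> k' \<in> {1..n} \<and> even k'}"

definition mixed_pts :: "nat \<Rightarrow> (nat \<Rightarrow> real) set" where
  "mixed_pts n = {x \<in> Rn n. tval n x < 0}"

definition level_pts :: "nat \<Rightarrow> (nat \<Rightarrow> real) set" where
  "level_pts n = {x \<in> Rn n. tval n x = 0}"

definition split_pts :: "nat \<Rightarrow> (nat \<Rightarrow> real) set" where
  "split_pts n = {x \<in> Rn n. tval n x > 0}"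

end

theory Submission
  imports Defs
begin

lemma coordc: "continuous_on S (\<lambda>x::nat\<Rightarrow>real. x k)"
  by (rule continuous_on_subset[OF continuous_on_product_coordinates]) simp

definition PP :: "nat \<Rightarrow> (nat \<times> nat) set" where
  "PP n = {(k,k'). k \<in> {1..n} \<and> odd k \<and> k' \<in> {1..n} \<and> even k'}"

lemma PP_fin: "finite (PP n)"
  by (rule finite_subset[of _ "{1..n} \<times> {1..n}"]) (auto simp: PP_def)

lemma PP_ne: "n \<ge> 2 \<Longrightarrow> PP n \<noteq> {}"
proof -
  assume "n \<ge> 2" hence "(1,2) \<in> PP n" by (simp add: PP_def)
  thus ?thesis by auto
qed

lemma tval_img: "tval n x = Min ((\<lambda>(k,k'). x k - x k') ` PP n)"
proof -
  have "{x k - x k' | k k'. k \<in> {1..n} \<and> odd k \<and> k' \<in> {1..n} \<and> even k'} = (\<lambda>(k,k'). x k - x k') ` PP n"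
    unfolding PP_def by auto
  thus ?thesis by (simp add: tval_def)
qed

lemma cont_Min_img:
  fixes f :: "'b \<Rightarrow> 'a::topological_space \<Rightarrow> real"
  assumes "finite P" "P \<noteq> {}" "\<And>p. continuous_on S (f p)"
  shows "continuous_on S (\<lambda>x. Min ((\<lambda>p. f p x) ` P))"
  using assms(1,2)
proof (induction P rule: finite_ne_induct)
  case (singleton y) thus ?case using assms(3) by simp
next
  case (insert y F)
  have "(\<lambda>x. Min ((\<lambda>p. f p x) ` insert y F)) = (\<lambda>x. min (f y x) (Min ((\<lambda>p. f p x) ` F)))"
    using insert by (simp add: Min_insert)
  thus ?case using insert assms(3) by (simp add: continuous_on_min)
qed

lemma tval_cont: "n \<ge> 2 \<Longrightarrow> continuous_on S (tval n)"
proof -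
  assume n: "n \<ge> 2"
  have "tval n = (\<lambda>x. Min ((\<lambda>p. x (fst p) - x (snd p)) ` PP n))"
    by (rule ext) (simp add: tval_img split_beta)
  moreover have "continuous_on S (\<lambda>x. Min ((\<lambda>p. x (fst p) - x (snd p)) ` PP n))"
    by (rule cont_Min_img[OF PP_fin PP_ne[OF n]])
       (intro continuous_intros coordc)
  ultimately show ?thesis by simp
qed

definition ee :: "nat \<Rightarrow> nat \<Rightarrow> real" where
  "ee n k = (if k \<in> {1..n} \<and> odd k then 1 else 0)"

lemma tval_shift:
  assumes "n \<ge> 2"
  shows "tval n (\<lambda>k. x k + c * ee n k) = tval n x + c"
proof -
  have "(\<lambda>(k,k'). (x k + c * ee n k) - (x k' + c * ee n k')) ` PP n
       = (\<lambda>t. t + c) ` ((\<lambda>(k,k'). x k - x k') ` PP n)"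
    unfolding image_image
  proof (rule image_cong[OF refl])
    fix p assume "p \<in> PP n"
    then obtain k k' where p: "p = (k,k')" "k \<in> {1..n}" "odd k" "k' \<in> {1..n}" "even k'"
      unfolding PP_def by blast
    hence "ee n k = 1" "ee n k' = 0" by (auto simp: ee_def)
    thus "(case p of (k, k') \<Rightarrow> x k + c * ee n k - (x k' + c * ee n k')) =
          (case p of (k, k') \<Rightarrow> x k - x k') + c" using p by simp
  qed
  moreover
  have m: "mono (\<lambda>t::real. t + c)" by (simp add: mono_def)
  have f: "finite ((\<lambda>(k,k'). x k - x k') ` PP n)" using PP_fin by simp
  have ne: "(\<lambda>(k,k'). x k - x k') ` PP n \<noteq> {}" using PP_ne[OF assms] by simp
  have "Min ((\<lambda>(k,k'). x k - x k') ` PP n) + c = Min ((\<lambda>t. t + c) ` ((\<lambda>(k,k'). x k - x k') ` PP n))"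
    by (rule mono_Min_commute[OF m f ne])
  ultimately show ?thesis
    unfolding tval_img by simp
qed

lemma ee_Rn: "ee n \<in> Rn n" by (simp add: Rn_def ee_def)

lemma shift_Rn: "x \<in> Rn n \<Longrightarrow> (\<lambda>k. x k + c * ee n k) \<in> Rn n"
  by (simp add: Rn_def ee_def)

lemma Rn_closed: "closed (Rn n)"
proof -
  have "Rn n = (\<Inter>k\<in>-{1..n}. {x. x k = 0})" by (auto simp: Rn_def)
  moreover have "closed {x::nat\<Rightarrow>real. x k = 0}" for k
    by (rule closed_Collect_eq) (auto intro: continuous_on_product_coordinates)
  ultimately show ?thesis by auto
qed

theorem lemma1p9:
  fixes n :: nat
  assumes "n \<ge> 2"
  shows "(\<exists>g h. homeomorphism (Rn n) (level_pts n \<times> (UNIV :: real set)) g h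
              \<and> g ` mixed_pts n = level_pts n \<times> {..<0}
              \<and> g ` split_pts n = level_pts n \<times> {0<..})
         \<and> closure (mixed_pts n) \<inter> closure (split_pts n) = level_pts n"
proof
  define g where "g = (\<lambda>x. ((\<lambda>k. x k + (- tval n x) * ee n k), tval n x))"
  define h where "h = (\<lambda>(y::nat\<Rightarrow>real, s::real). (\<lambda>k. y k + s * ee n k))"
  have gh: "h (g x) = x" for x by (auto simp: g_def h_def algebra_simps)
  have hg: "y \<in> Rn n \<Longrightarrow> tval n y = 0 \<Longrightarrow> g (h (y,s)) = (y,s)" for y s
    using tval_shift[OF assms, of y s] by (auto simp: g_def h_def algebra_simps)
  have tg: "tval n (fst (g x)) = 0" for x
    using tval_shift[OF assms, of x "- tval n x"] by (simp add: g_def)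
  have tg2: "snd (g x) = tval n x" for x by (simp add: g_def)
  have gR: "x \<in> Rn n \<Longrightarrow> fst (g x) \<in> Rn n" for x using shift_Rn[of x n "- tval n x"] by (simp add: g_def)
  have ht: "tval n (h (y,s)) = tval n y + s" for y s using tval_shift[OF assms] by (simp add: h_def)
  have hR: "y \<in> Rn n \<Longrightarrow> h (y,s) \<in> Rn n" for y s by (simp add: h_def shift_Rn)
  have cg: "continuous_on (Rn n) g"
    unfolding g_def
    by (intro continuous_intros coordc tval_cont[OF assms])
  have ch: "continuous_on S h" for S
    unfolding h_def split_beta
    by (intro continuous_intros continuous_on_product_then_coordinatewise[OF continuous_on_fst[OF continuous_on_id]])
  have homeo: "homeomorphism (Rn n) (level_pts n \<times> (UNIV :: real set)) g h"
  proof (rule homeomorphismI[OF cg ch])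
    show "g ` Rn n \<subseteq> level_pts n \<times> UNIV"
      using gR tg by (auto simp: level_pts_def image_subset_iff mem_Times_iff)
    show "h ` (level_pts n \<times> UNIV) \<subseteq> Rn n" using hR by (auto simp: level_pts_def)
  qed (auto simp: gh level_pts_def hg)
  have imgs: "g ` {x \<in> Rn n. P (tval n x)} = level_pts n \<times> {s. P s}" for P
  proof
    show "g ` {x \<in> Rn n. P (tval n x)} \<subseteq> level_pts n \<times> {s. P s}"
      using gR tg tg2 by (auto simp: level_pts_def image_subset_iff mem_Times_iff)
    show "level_pts n \<times> {s. P s} \<subseteq> g ` {x \<in> Rn n. P (tval n x)}"
    proof
      fix p assume "p \<in> level_pts n \<times> {s. P s}"
      then obtain y s where p: "p = (y,s)" "y \<in> Rn n" "tval n y = 0" "P s"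
        by (auto simp: level_pts_def)
      hence "h (y,s) \<in> {x \<in> Rn n. P (tval n x)}" using hR ht by auto
      moreover have "g (h (y,s)) = p" using hg p by auto
      ultimately show "p \<in> g ` {x \<in> Rn n. P (tval n x)}" by force
    qed
  qed
  show "\<exists>g h. homeomorphism (Rn n) (level_pts n \<times> (UNIV :: real set)) g h
              \<and> g ` mixed_pts n = level_pts n \<times> {..<0}
              \<and> g ` split_pts n = level_pts n \<times> {0<..}"
    apply (rule exI[of _ g], rule exI[of _ h])
    using homeo imgs[of "\<lambda>s. s < 0"] imgs[of "\<lambda>s. s > 0"]
    by (simp add: mixed_pts_def split_pts_def lessThan_def greaterThan_def)
  have cl: "closed {x \<in> Rn n. P (tval n x)}" if "closed {s. P s}" for P
  proof -
    have "closed (tval n -` {s. P s})" by (intro closed_vimage that tval_cont[OF assms])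
    hence "closed (Rn n \<inter> tval n -` {s. P s})" using Rn_closed by auto
    moreover have "Rn n \<inter> tval n -` {s. P s} = {x \<in> Rn n. P (tval n x)}" by auto
    ultimately show ?thesis by simp
  qed
  have c1: "closure (mixed_pts n) \<subseteq> {x \<in> Rn n. tval n x \<le> 0}"
    by (rule closure_minimal) (auto simp: mixed_pts_def intro!: cl closed_Collect_le continuous_on_id continuous_on_const)
  have c2: "closure (split_pts n) \<subseteq> {x \<in> Rn n. tval n x \<ge> 0}"
    by (rule closure_minimal) (auto simp: split_pts_def intro!: cl closed_Collect_le continuous_on_id continuous_on_const)
  have seq: "x \<in> closure {y \<in> Rn n. P (tval n y)}"
    if x: "x \<in> level_pts n" and P: "\<And>m. P (c / real (Suc m))" for P c x
  proof -
    have xR: "x \<in> Rn n" and t0: "tval n x = 0" using x by (auto simp: level_pts_def)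
    have "continuous_on UNIV (\<lambda>s. h (x,s))"
      by (rule continuous_on_compose2[OF ch[of UNIV]]) (auto intro: continuous_intros)
    hence "isCont (\<lambda>s. h (x,s)) 0" by (simp add: continuous_on_eq_continuous_at)
    moreover have "(\<lambda>m. c / real (Suc m)) \<longlonglongrightarrow> 0"
      using tendsto_mult[OF tendsto_const[of c] LIMSEQ_inverse_real_of_nat]
      by (simp add: divide_inverse)
    ultimately have "(\<lambda>m. h (x, c / real (Suc m))) \<longlonglongrightarrow> h (x,0)"
      by (rule isCont_tendsto_compose)
    moreover have "h (x,0) = x" by (simp add: h_def)
    moreover have "h (x, c / real (Suc m)) \<in> {y \<in> Rn n. P (tval n y)}" for m
    proof -
      have "tval n (h (x, c / real (Suc m))) = c / real (Suc m)" using ht[of x] t0 by simp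
      thus ?thesis using hR[OF xR] P[of m] by simp
    qed
    ultimately have "(\<forall>m. h (x, c / real (Suc m)) \<in> {y \<in> Rn n. P (tval n y)})
       \<and> ((\<lambda>m. h (x, c / real (Suc m))) \<longlongrightarrow> x) sequentially" by simp
    thus ?thesis unfolding closure_sequential by (rule exI[where x="\<lambda>m. h (x, c / real (Suc m))"])
  qed
  show "closure (mixed_pts n) \<inter> closure (split_pts n) = level_pts n"
  proof
    show "closure (mixed_pts n) \<inter> closure (split_pts n) \<subseteq> level_pts n"
    proof
      fix x assume "x \<in> closure (mixed_pts n) \<inter> closure (split_pts n)"
      hence "x \<in> {x \<in> Rn n. tval n x \<le> 0}" "x \<in> {x \<in> Rn n. tval n x \<ge> 0}"
        using c1 c2 by blast+
      thus "x \<in> level_pts n" by (simp add: level_pts_def)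
    qed
    show "level_pts n \<subseteq> closure (mixed_pts n) \<inter> closure (split_pts n)"
    proof
      fix x assume x: "x \<in> level_pts n"
      have "x \<in> closure {y \<in> Rn n. tval n y < 0}"
        by (rule seq[OF x, of _ "-1"]) (simp add: divide_neg_pos)
      moreover have "x \<in> closure {y \<in> Rn n. tval n y > 0}"
        by (rule seq[OF x, of _ "1"]) simp
      ultimately show "x \<in> closure (mixed_pts n) \<inter> closure (split_pts n)"
        by (simp add: mixed_pts_def split_pts_def)
    qed
  qed
qed

end
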